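(* Let $X$ be a real Banach space with modulus of smoothness $\rho(u,X)\le\gamma u^q$ for all $u\ge0$, where $\gamma>0$ and $1<q\le2$; set $\mu(u):=\gamma u^q$ and $p:=\frac{q}{q-1}$. Let $t\in(0,1]$, $b\in(0,1]$, and $c:=(1-b)\left(\frac{b}{2\gamma}\right)^{\frac1{q-1}}$. Then for every $m\ge1$ and every $\alpha\in(0,1]$ with $\alpha\le \frac{t(1-b)}{1+t(1-b)}$, $$\gamma_m^{t,b,\mu}(\alpha,X)\le (1+mct^p)^{-\alpha/p},$$ and the same inequality holds for $\gamma_m^{t,b,\mu}(\alpha,X)^*$.
   Context: The modulus of smoothness is $\rho(u,X):=\sup_{\|x\|=\|y\|=1}\bigl(\tfrac12(\|x+uy\|+\|x-uy\|)-1\bigr)$. A (symmetric) dictionary is a set $\mathcal D\subset X$ of unit-norm elements with $\overline{\operatorname{span}}\,\mathcal D=X$ and $g\in\mathcal D\Rightarrow-g\in\mathcal D$. $A_1(\mathcal D)$ is the closed convex hull of $\mathcal D$, $\|f\|_{A_1(\mathcal D)}:=\inf\{M:f/M\in A_1(\mathcal D)\}$. For $f\ne0$, $F_f$ denotes a norming functional ($\|F_f\|=1$, $F_f(f)=\|f\|$; unique here since $X$ is uniformly smooth), and $r_{\mathcal D}(f):=\sup_{g\in\mathcal D}F_f(g)$. Dual Greedy Algorithm DGA$(t,b,\mu)$: $f_0:=f$, $G_0:=0$; if $f_{m-1}=0$ set $f_j=0$ for $j\ge m$ and stop; otherwise (1) take any $\varphi_m\in\mathcal D$ with $F_{f_{m-1}}(\varphi_m)\ge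 t\,r_{\mathcal D}(f_{m-1})$; (2) choose $c_m>0$ from $\|f_{m-1}\|\mu(c_m/\|f_{m-1}\|)=\frac{tb}{2}c_m r_{\mathcal D}(f_{m-1})$; (3) $f_m:=f_{m-1}-c_m\varphi_m$, $G_m^{t,b,\mu}:=G_{m-1}^{t,b,\mu}+c_m\varphi_m$. The modification DGA$(t,b,\mu)^*$ is identical except that in (2) $c_m>0$ solves $\|f_{m-1}\|\mu(c_m/\|f_{m-1}\|)=\frac b2 c_mF_{f_{m-1}}(\varphi_m)$. Define $$\gamma_m^{t,b,\mu}(\alpha,X):=\sup_{\mathcal D}\sup_f\sup_{G^{t,b,\mu}_m(f,\mathcal D)}\frac{\|f-G^{t,b,\mu}_m(f,\mathcal D)\|}{\|f\|^{1-\alpha}\|f\|_{A_1(\mathcal D)}^{\alpha}},$$ over all dictionaries, all $f\ne0$ with $\|f\|_{A_1(\mathcal D)}<\infty$, and all realizations of DGA$(t,b,\mu)$ after $m$ steps; $\gamma_m^{t,b,\mu}(\alpha,X)^*$ is the same quantity for DGA$(t,b,\mu)^*$. *)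

theory Defs
  imports "HOL-Analysis.Analysis" "HOL-Library.Extended_Real"
begin

definition modulus_of_smoothness :: "real \<Rightarrow> 'a::real_normed_vector itself \<Rightarrow> ereal" where
  "modulus_of_smoothness u (TYPE('a)) =
     (SUP (x,y) \<in> {(x::'a, y::'a). norm x = 1 \<and> norm y = 1}.
        ereal ((norm (x + u *\<^sub>R y) + norm (x - u *\<^sub>R y)) / 2 - 1))"

definition dictionary :: "'a::real_normed_vector set \<Rightarrow> bool" where
  "dictionary D \<longleftrightarrow> (\<forall>g\<in>D. norm g = 1) \<and> closure (span D) = UNIV \<and> (\<forall>g\<in>D. - g \<in> D)"

definition A1 :: "'a::real_normed_vector set \<Rightarrow> 'a set" where
  "A1 D = closure (convex hull D)"

definition A1norm :: "'a::real_normed_vector set \<Rightarrow> 'a \<Rightarrow> real" where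
  "A1norm D f = Inf {M. M > 0 \<and> (1 / M) *\<^sub>R f \<in> A1 D}"

definition A1_finite :: "'a::real_normed_vector set \<Rightarrow> 'a \<Rightarrow> bool" where
  "A1_finite D f \<longleftrightarrow> {M. M > 0 \<and> (1 / M) *\<^sub>R f \<in> A1 D} \<noteq> {}"

definition norming_functional :: "'a::real_normed_vector \<Rightarrow> ('a \<Rightarrow> real) \<Rightarrow> bool" where
  "norming_functional f F \<longleftrightarrow> bounded_linear F \<and> onorm F = 1 \<and> F f = norm f"

definition r_D :: "'a::real_normed_vector set \<Rightarrow> ('a \<Rightarrow> real) \<Rightarrow> real" where
  "r_D D F = (SUP g\<in>D. F g)"

text \<open>One step of DGA(t,b,mu) (star = False) or DGA(t,b,mu)* (star = True),
  passing from residual f to residual f'.\<close>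
definition dga_step :: "bool \<Rightarrow> real \<Rightarrow> real \<Rightarrow> (real \<Rightarrow> real) \<Rightarrow> 'a::real_normed_vector set
    \<Rightarrow> 'a \<Rightarrow> 'a \<Rightarrow> bool" where
  "dga_step star t b \<mu> D f f' \<longleftrightarrow>
     (if f = 0 then f' = 0 else
      (\<exists>F \<phi> c. norming_functional f F \<and> \<phi> \<in> D \<and> F \<phi> \<ge> t * r_D D F \<and> c > 0 \<and>
         (if star then norm f * \<mu> (c / norm f) = b / 2 * c * F \<phi>
          else norm f * \<mu> (c / norm f) = t * b / 2 * c * r_D D F) \<and>
         f' = f - c *\<^sub>R \<phi>))"

text \<open>G is a possible m-th approximant G_m of f produced by the algorithm
  (G_m = c_1 phi_1 + ... + c_m phi_m = f - f_m).\<close>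
definition dga_approx :: "bool \<Rightarrow> real \<Rightarrow> real \<Rightarrow> (real \<Rightarrow> real) \<Rightarrow> 'a::real_normed_vector set
    \<Rightarrow> 'a \<Rightarrow> nat \<Rightarrow> 'a \<Rightarrow> bool" where
  "dga_approx star t b \<mu> D f m G \<longleftrightarrow>
     (\<exists>fs. fs 0 = f \<and> (\<forall>i<m. dga_step star t b \<mu> D (fs i) (fs (Suc i))) \<and> G = f - fs m)"

definition dga_gamma :: "bool \<Rightarrow> real \<Rightarrow> real \<Rightarrow> (real \<Rightarrow> real) \<Rightarrow> real \<Rightarrow> nat
    \<Rightarrow> 'a::real_normed_vector itself \<Rightarrow> ereal" where
  "dga_gamma star t b \<mu> \<alpha> m (TYPE('a)) =
     (SUP (D,f,G) \<in> {(D::'a set, f, G). dictionary D \<and> f \<noteq> 0 \<and> A1_finite D f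
                      \<and> dga_approx star t b \<mu> D f m G}.
        ereal (norm (f - G) / (norm f powr (1 - \<alpha>) * A1norm D f powr \<alpha>)))"

end

theory Submission
  imports Defs
begin


lemma bern_powr:
  fixes x k :: real assumes "0 \<le> x" "0 \<le> k" "k \<le> 1"
  shows "(1 + x) powr k \<le> 1 + k * x"
  using Youngs_inequality_0[of k "1 - k" "1 + x" 1] assms by (simp add: algebra_simps)

lemma numeric:
  fixes a c B :: "nat \<Rightarrow> real" and A \<kappa> C p :: real and m :: nat
  assumes A: "A > 0" and k: "0 < \<kappa>" "\<kappa> \<le> 1" and C: "C > 0" and p: "p \<ge> 1"
    and a0: "a 0 > 0" "a 0 \<le> A" and anon: "\<forall>n. a n \<ge> 0" and cnon: "\<forall>n<m. c n \<ge> 0"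
    and B: "\<forall>n. B n = A + (\<Sum>j<n. c j)"
    and H1: "\<forall>n<m. a (Suc n) \<le> a n * (1 - \<kappa> * c n / B n)"
    and H2: "\<forall>n<m. a (Suc n) \<le> a n * (1 - C * (a n / B n) powr p)"
  shows "n \<le> m \<Longrightarrow> a n * B n powr \<kappa> \<le> a 0 * A powr \<kappa>
     \<and> (a n / B n) powr p * ((A / a 0) powr p + n * C) \<le> 1 \<and> B n \<ge> A"
proof (induction n)
  case 0
  have "(a 0 / A) powr p * (A / a 0) powr p = 1"
    using A a0 by (simp add: powr_mult[symmetric])
  then show ?case using B by simp
next
  case (Suc n)
  then have nm: "n < m" by simp
  from Suc nm have IH1: "a n * B n powr \<kappa> \<le> a 0 * A powr \<kappa>"
    and IH2: "(a n / B n) powr p * ((A / a 0) powr p + n * C) \<le> 1" and IH3: "B n \<ge> A" by auto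
  have cn: "c n \<ge> 0" using cnon nm by auto
  have BS: "B (Suc n) = B n + c n" using B by simp
  have Bpos: "B n > 0" using IH3 A by simp
  have h1: "a (Suc n) \<le> a n * (1 - \<kappa> * c n / B n)" using H1 nm by auto
  have h2: "a (Suc n) \<le> a n * (1 - C * (a n / B n) powr p)" using H2 nm by auto
  have an: "a n \<ge> 0" "a (Suc n) \<ge> 0" using anon by auto
  have G3: "B (Suc n) \<ge> A" using BS IH3 cn by simp
  have G1: "a (Suc n) * B (Suc n) powr \<kappa> \<le> a 0 * A powr \<kappa>"
  proof (cases "a (Suc n) = 0")
    case True then show ?thesis using a0 A by simp
  next
    case False
    define x where "x = c n / B n"
    have x0: "x \<ge> 0" using cn Bpos by (simp add: x_def)
    have ax: "a n * (1 - \<kappa> * x) \<ge> a (Suc n)" using h1 by (simp add: x_def)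
    have kx: "1 - \<kappa> * x \<ge> 0"
    proof (rule ccontr)
      assume "\<not> ?thesis"
      then have "a n * (1 - \<kappa> * x) \<le> 0" using an by (simp add: mult_nonneg_nonpos)
      then show False using ax False an by linarith
    qed
    have BSx: "B (Suc n) = B n * (1 + x)" using BS Bpos by (simp add: x_def field_simps)
    have "B (Suc n) powr \<kappa> = B n powr \<kappa> * (1 + x) powr \<kappa>"
      using BSx Bpos x0 by (simp add: powr_mult)
    also have "\<dots> \<le> B n powr \<kappa> * (1 + \<kappa> * x)"
      using bern_powr[OF x0, of \<kappa>] k by (simp add: mult_left_mono)
    finally have b1: "B (Suc n) powr \<kappa> \<le> B n powr \<kappa> * (1 + \<kappa> * x)" .
    have "a (Suc n) * B (Suc n) powr \<kappa> \<le> a n * (1 - \<kappa> * x) * (B n powr \<kappa> * (1 + \<kappa> * x))"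
      using ax b1 an by (simp add: mult_mono)
    also have "\<dots> = a n * B n powr \<kappa> * (1 - (\<kappa> * x)^2)" by (simp add: algebra_simps power2_eq_square)
    also have "\<dots> \<le> a n * B n powr \<kappa>"
      using an by (simp add: mult_left_le)
    finally show ?thesis using IH1 by linarith
  qed
  have G2: "(a (Suc n) / B (Suc n)) powr p * ((A / a 0) powr p + Suc n * C) \<le> 1"
  proof (cases "a (Suc n) = 0")
    case True then show ?thesis by simp
  next
    case False
    define u where "u = (a n / B n) powr p"
    define K where "K = (A / a 0) powr p + n * C"
    have u0: "u \<ge> 0" by (simp add: u_def)
    have K1: "K \<ge> 1"
    proof -
      have "A / a 0 \<ge> 1" using a0 by simp
      then have "(A / a 0) powr p \<ge> 1" using p by (simp add: ge_one_powr_ge_zero)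
      moreover have "real n * C \<ge> 0" using C by simp
      ultimately show ?thesis by (simp add: K_def)
    qed
    have uK: "u * K \<le> 1" using IH2 by (simp add: u_def K_def)
    have ax: "a n * (1 - C * u) \<ge> a (Suc n)" using h2 by (simp add: u_def)
    have apos: "a (Suc n) > 0" using False an by simp
    have cu: "1 - C * u > 0" and anp: "a n > 0"
    proof -
      have "a n * (1 - C * u) > 0" using ax apos by linarith
      then show "1 - C * u > 0" "a n > 0" using an by (auto simp: zero_less_mult_iff)
    qed
    have "a (Suc n) / B (Suc n) \<le> a (Suc n) / B n"
      using BS cn Bpos an by (simp add: frac_le)
    also have "\<dots> \<le> (a n / B n) * (1 - C * u)" using ax Bpos by (simp add: divide_right_mono)
    finally have r: "a (Suc n) / B (Suc n) \<le> (a n / B n) * (1 - C * u)" .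
    have "(a (Suc n) / B (Suc n)) powr p \<le> ((a n / B n) * (1 - C * u)) powr p"
      using r p an Bpos BS cn by (intro powr_mono2) auto
    also have "\<dots> = u * (1 - C * u) powr p" using anp Bpos cu by (subst powr_mult) (auto simp: u_def)
    also have "\<dots> \<le> u * (1 - C * u)"
      using powr_le_one_le[of "1 - C * u" p] cu u0 C p by (simp add: mult_left_mono)
    finally have r2: "(a (Suc n) / B (Suc n)) powr p \<le> u * (1 - C * u)" .
    have key: "u * (1 - C * u) * (K + C) \<le> 1"
    proof -
      have "C * u \<le> 1" using cu by simp
      moreover have "0 \<le> C * u" using C u0 by simp
      moreover have "0 \<le> u * K" using u0 K1 by simp
      ultimately have "u * K + C * u * (1 - u * K - C * u) \<le> 1" using uK
      proof -
        have "0 \<le> (1 - u * K) * (1 - C * u) + (C * u)^2"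
          using \<open>C * u \<le> 1\<close> uK by (simp add: mult_nonneg_nonneg)
        then show ?thesis by (simp add: algebra_simps power2_eq_square)
      qed
      then show ?thesis by (simp add: algebra_simps)
    qed
    have "(a (Suc n) / B (Suc n)) powr p * ((A / a 0) powr p + Suc n * C) \<le> u * (1 - C * u) * (K + C)"
    proof (rule mult_mono)
      show "(a (Suc n) / B (Suc n)) powr p \<le> u * (1 - C * u)" by (rule r2)
      show "(A / a 0) powr p + real (Suc n) * C \<le> K + C" by (simp add: K_def algebra_simps)
      show "0 \<le> u * (1 - C * u)" using u0 cu by simp
      show "0 \<le> (A / a 0) powr p + real (Suc n) * C" using C by simp
    qed
    then show ?thesis using key by linarith
  qed
  show ?case using G1 G2 G3 by blast
qed



lemma final_numeric:
  fixes am a0 A B \<kappa> C p \<alpha> :: real and m :: nat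
  assumes am: "am \<ge> 0" and a0: "a0 > 0" "a0 \<le> A" and BA: "B \<ge> A"
    and k: "0 < \<kappa>" "\<kappa> \<le> 1" and C: "C > 0" and p: "p \<ge> 1"
    and al: "0 < \<alpha>" "\<alpha> \<le> \<kappa> / (1 + \<kappa>)"
    and I1: "am * B powr \<kappa> \<le> a0 * A powr \<kappa>"
    and I2: "(am / B) powr p * ((A / a0) powr p + m * C) \<le> 1"
  shows "am \<le> a0 powr (1 - \<alpha>) * A powr \<alpha> * (1 + m * C) powr (- \<alpha> / p)"
proof -
  have A0: "A > 0" using a0 by simp
  have B0: "B > 0" using A0 BA by simp
  have mC: "1 + m * C \<ge> 1" using C by simp
  have "A powr \<kappa> \<le> B powr \<kappa>" using BA A0 k by (simp add: powr_mono2)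
  then have "am * A powr \<kappa> \<le> a0 * A powr \<kappa>" using I1 am
    by (meson dual_order.trans mult_left_mono)
  then have ama0: "am \<le> a0" using A0 by simp
  define W where "W = (A / a0) * (1 + m * C) powr (- 1 / p)"
  have W0: "W > 0" using A0 a0 mC by (simp add: W_def)
  have RHS: "a0 powr (1 - \<alpha>) * A powr \<alpha> * (1 + m * C) powr (- \<alpha> / p) = a0 * W powr \<alpha>"
  proof -
    have "W powr \<alpha> = (A / a0) powr \<alpha> * ((1 + m * C) powr (- 1 / p)) powr \<alpha>"
      unfolding W_def using A0 a0 mC by (subst powr_mult) auto
    also have "\<dots> = A powr \<alpha> / a0 powr \<alpha> * (1 + m * C) powr (- \<alpha> / p)"
      using A0 a0 by (simp add: powr_divide powr_powr)
    finally have "a0 * W powr \<alpha> = a0 / a0 powr \<alpha> * A powr \<alpha> * (1 + m * C) powr (- \<alpha> / p)"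
      using a0 by simp
    also have "a0 / a0 powr \<alpha> = a0 powr (1 - \<alpha>)"
      using a0 by (simp add: powr_diff)
    finally show ?thesis by simp
  qed
  show ?thesis
  proof (cases "W \<ge> 1")
    case True
    then have "W powr \<alpha> \<ge> 1" using al by (simp add: ge_one_powr_ge_zero)
    then have "a0 \<le> a0 * W powr \<alpha>" using a0 by simp
    then show ?thesis using ama0 RHS by simp
  next
    case False
    show ?thesis
    proof (cases "am = 0")
      case True then show ?thesis using RHS W0 a0 by simp
    next
      case amz: False
      then have am0: "am > 0" using am by simp
      define e where "e = 1 / \<kappa>"
      have e0: "e > 0" using k by (simp add: e_def)
      define y where "y = am / B"
      have y0: "y > 0" using am0 B0 by (simp add: y_def)
      have Ap: "(A / a0) powr p \<ge> 1" using a0 p by (simp add: ge_one_powr_ge_zero)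
      have "y powr p * (1 + m * C) \<le> y powr p * ((A / a0) powr p + m * C)"
        using Ap by (intro mult_left_mono) auto
      then have "y powr p * (1 + m * C) \<le> 1" using I2 by (simp add: y_def)
      then have yp: "y powr p \<le> 1 / (1 + m * C)" using mC by (simp add: field_simps)
      have "y = (y powr p) powr (1 / p)" using y0 p by (simp add: powr_powr)
      also have "\<dots> \<le> (1 / (1 + m * C)) powr (1 / p)" using yp p by (intro powr_mono2) auto
      also have "\<dots> = (1 + m * C) powr (- 1 / p)" using mC
        by (simp add: powr_divide powr_minus_divide)
      finally have yb: "y \<le> (1 + m * C) powr (- 1 / p)" .
      have "(am * B powr \<kappa>) powr e \<le> (a0 * A powr \<kappa>) powr e"
        using I1 e0 am0 B0 by (intro powr_mono2) auto
      then have I1e: "am powr e * B \<le> a0 powr e * A"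
        using am0 B0 a0 A0 k by (simp add: powr_mult powr_powr e_def)
      have "am powr (1 + e) = am powr e * y * B" using am0 B0
        by (simp add: powr_add y_def)
      also have "\<dots> \<le> a0 powr e * A * y" using I1e y0 by (simp add: mult.commute mult.left_commute mult_right_mono)
      finally have "am powr (1 + e) / a0 powr (1 + e) \<le> a0 powr e * A * y / a0 powr (1 + e)"
        using a0 by (simp add: divide_right_mono)
      also have "\<dots> = (A / a0) * y" using a0 by (simp add: powr_add field_simps)
      also have "\<dots> \<le> W" unfolding W_def using yb A0 a0 by (intro mult_left_mono) auto
      finally have "(am / a0) powr (1 + e) \<le> W" using am0 a0 by (simp add: powr_divide)
      then have "((am / a0) powr (1 + e)) powr (1 / (1 + e)) \<le> W powr (1 / (1 + e))"
        using e0 by (intro powr_mono2) auto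
      then have h: "am / a0 \<le> W powr (1 / (1 + e))" using e0 am0 a0 by (simp add: powr_powr)
      have "1 / (1 + e) = \<kappa> / (1 + \<kappa>)" using k by (simp add: e_def field_simps)
      then have "W powr (1 / (1 + e)) \<le> W powr \<alpha>" using al False W0
        by (simp add: powr_mono')
      then have "am / a0 \<le> W powr \<alpha>" using h by simp
      then show ?thesis using RHS a0 by (simp add: field_simps)
    qed
  qed
qed



lemma nf_le:
  assumes "norming_functional f F" shows "F x \<le> norm x" "bounded_linear F" "F f = norm f"
proof -
  have bl: "bounded_linear F" and on: "onorm F = 1" using assms by (auto simp: norming_functional_def)
  have "\<bar>F x\<bar> \<le> onorm F * norm x" using onorm[OF bl, of x] by simp
  then show "F x \<le> norm x" using on by simp
  show "bounded_linear F" by fact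
  show "F f = norm f" using assms by (simp add: norming_functional_def)
qed

lemma smooth_ineq:
  fixes f \<phi> :: "'a::banach"
  assumes sm: "\<forall>u\<ge>0. modulus_of_smoothness u TYPE('a) \<le> ereal (\<gamma> * u powr q)"
    and f: "f \<noteq> 0" and F: "norming_functional f F" and \<phi>: "norm \<phi> = 1" and c: "c > 0"
  shows "norm (f - c *\<^sub>R \<phi>) \<le> norm f + 2 * (norm f * (\<gamma> * (c / norm f) powr q)) - c * F \<phi>"
proof -
  define x where "x = (1 / norm f) *\<^sub>R f"
  define u where "u = c / norm f"
  have nf: "norm f > 0" using f by simp
  have x1: "norm x = 1" using nf by (simp add: x_def)
  have u0: "u \<ge> 0" using c nf by (simp add: u_def)
  have "ereal ((norm (x + u *\<^sub>R \<phi>) + norm (x - u *\<^sub>R \<phi>)) / 2 - 1) \<le> modulus_of_smoothness u TYPE('a)"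
    unfolding modulus_of_smoothness_def
    by (rule SUP_upper2[of "(x, \<phi>)"]) (use x1 \<phi> in auto)
  also have "\<dots> \<le> ereal (\<gamma> * u powr q)" using sm u0 by auto
  finally have ineq: "(norm (x + u *\<^sub>R \<phi>) + norm (x - u *\<^sub>R \<phi>)) / 2 - 1 \<le> \<gamma> * u powr q" by simp
  have e1: "norm f *\<^sub>R (x + u *\<^sub>R \<phi>) = f + c *\<^sub>R \<phi>" using nf
    by (simp add: x_def u_def scaleR_add_right)
  have e2: "norm f *\<^sub>R (x - u *\<^sub>R \<phi>) = f - c *\<^sub>R \<phi>" using nf
    by (simp add: x_def u_def scaleR_diff_right)
  have n1: "norm (f + c *\<^sub>R \<phi>) = norm f * norm (x + u *\<^sub>R \<phi>)"
    using e1[symmetric] nf by simp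
  have n2: "norm (f - c *\<^sub>R \<phi>) = norm f * norm (x - u *\<^sub>R \<phi>)"
    using e2[symmetric] nf by simp
  have "norm (f + c *\<^sub>R \<phi>) + norm (f - c *\<^sub>R \<phi>) \<le> norm f * (2 + 2 * (\<gamma> * u powr q))"
  proof -
    have "norm (x + u *\<^sub>R \<phi>) + norm (x - u *\<^sub>R \<phi>) \<le> 2 + 2 * (\<gamma> * u powr q)" using ineq by (simp add: field_simps)
    then show ?thesis unfolding n1 n2 using nf
      by (simp add: distrib_left[symmetric] mult_left_mono)
  qed
  moreover have "F (f + c *\<^sub>R \<phi>) \<le> norm (f + c *\<^sub>R \<phi>)" using nf_le(1)[OF F] .
  moreover have "F (f + c *\<^sub>R \<phi>) = norm f + c * F \<phi>"
    using nf_le(2,3)[OF F] by (simp add: linear_add[OF bounded_linear.linear] linear_scale[OF bounded_linear.linear])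
  ultimately show ?thesis by (simp add: u_def algebra_simps)
qed




lemma rD_props:
  fixes F :: "'a::real_normed_vector \<Rightarrow> real"
  assumes F: "norming_functional f F" and D: "dictionary D" and ne: "D \<noteq> {}"
  shows "\<forall>g\<in>D. F g \<le> r_D D F" "r_D D F \<le> 1" "r_D D F \<ge> 0"
proof -
  have g1: "\<forall>g\<in>D. norm g = 1" and sym: "\<forall>g\<in>D. - g \<in> D" using D by (auto simp: dictionary_def)
  have Fle: "\<And>g. g \<in> D \<Longrightarrow> F g \<le> 1" by (metis nf_le(1)[OF F] g1)
  have bdd: "bdd_above (F ` D)" using Fle by (intro bdd_aboveI2[where M=1]) auto
  show up: "\<forall>g\<in>D. F g \<le> r_D D F" unfolding r_D_def using bdd by (auto intro: cSUP_upper)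
  show "r_D D F \<le> 1" unfolding r_D_def using ne Fle by (auto intro: cSUP_least)
  obtain g where g: "g \<in> D" using ne by auto
  have "F (- g) = - F g" using nf_le(2)[OF F] by (simp add: linear_neg[OF bounded_linear.linear])
  moreover have "F g \<le> r_D D F" "F (- g) \<le> r_D D F" using up g sym by auto
  ultimately show "r_D D F \<ge> 0" by linarith
qed

lemma A1_bound:
  fixes F :: "'a::real_normed_vector \<Rightarrow> real"
  assumes bl: "bounded_linear F" and up: "\<forall>g\<in>D. F g \<le> r" and r0: "r \<ge> 0" and fin: "A1_finite D f"
  shows "F f \<le> r * A1norm D f"
proof -
  define T where "T = {h. F h \<le> r}"
  have cT: "convex T" unfolding T_def convex_def
    using bl by (auto simp: linear_add[OF bounded_linear.linear] linear_scale[OF bounded_linear.linear]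
        intro!: convex_bound_le)
  have clT: "closed T" unfolding T_def
    by (rule closed_Collect_le) (auto intro: bounded_linear.continuous_on[OF bl] continuous_on_id)
  have "convex hull D \<subseteq> T" using up cT by (intro hull_minimal) (auto simp: T_def)
  then have A1T: "A1 D \<subseteq> T" unfolding A1_def using clT by (intro closure_minimal)
  define S where "S = {M. M > 0 \<and> (1 / M) *\<^sub>R f \<in> A1 D}"
  have Sne: "S \<noteq> {}" using fin by (simp add: A1_finite_def S_def)
  have SM: "F f \<le> r * M" if "M \<in> S" for M
  proof -
    have "M > 0" "F ((1 / M) *\<^sub>R f) \<le> r" using that A1T by (auto simp: S_def T_def)
    then show ?thesis using bl by (simp add: linear_scale[OF bounded_linear.linear] field_simps)
  qed
  show ?thesis
  proof (cases "r = 0")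
    case True
    then show ?thesis using SM Sne by auto
  next
    case False
    then have rp: "r > 0" using r0 by simp
    have "F f / r \<le> Inf S"
      using Sne SM rp by (intro cInf_greatest) (auto simp: field_simps)
    then show ?thesis using rp by (simp add: A1norm_def S_def[symmetric] field_simps)
  qed
qed

lemma A1norm_nonneg: "A1_finite D f \<Longrightarrow> A1norm D f \<ge> 0"
  unfolding A1norm_def A1_finite_def by (intro cInf_greatest) auto




lemma step_props:
  fixes f f' :: "'a::banach"
  assumes sm: "\<forall>u\<ge>0. modulus_of_smoothness u TYPE('a) \<le> ereal (\<gamma> * u powr q)"
    and g: "\<gamma> > 0" and q: "q > 1" and t: "t > 0" "t \<le> 1" and b: "b > 0" "b \<le> 1"
    and D: "dictionary D" and st: "dga_step star t b (\<lambda>u. \<gamma> * u powr q) D f f'" and f: "f \<noteq> 0"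
  shows "\<exists>F \<phi> c. norming_functional f F \<and> \<phi> \<in> D \<and> c > 0 \<and> f' = f - c *\<^sub>R \<phi> \<and>
     norm f' \<le> norm f - t * (1 - b) * c * r_D D F \<and>
     c \<ge> norm f * (t * b * r_D D F / (2 * \<gamma>)) powr (1 / (q - 1))"
proof -
  obtain F \<phi> c where F: "norming_functional f F" and \<phi>: "\<phi> \<in> D" and tr: "F \<phi> \<ge> t * r_D D F"
    and c: "c > 0"
    and eq: "if star then norm f * (\<gamma> * (c / norm f) powr q) = b / 2 * c * F \<phi>
          else norm f * (\<gamma> * (c / norm f) powr q) = t * b / 2 * c * r_D D F"
    and f': "f' = f - c *\<^sub>R \<phi>"
    using st f unfolding dga_step_def by auto
  define r where "r = r_D D F"
  have r0: "r \<ge> 0" using rD_props(3)[OF F D] \<phi> by (auto simp: r_def)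
  have n\<phi>: "norm \<phi> = 1" using D \<phi> by (auto simp: dictionary_def)
  have nf: "norm f > 0" using f by simp
  define u where "u = c / norm f"
  have u0: "u > 0" using c nf by (simp add: u_def)
  have cu: "c = norm f * u" using nf by (simp add: u_def)
  have uq: "u powr q = u * u powr (q - 1)" using u0 powr_add[of u 1 "q - 1"] by simp
  have sI: "norm f' \<le> norm f + 2 * (norm f * (\<gamma> * u powr q)) - c * F \<phi>"
    using smooth_ineq[OF sm f F n\<phi> c] by (simp add: f' u_def)
  have main: "norm f' \<le> norm f - t * (1 - b) * c * r \<and> \<gamma> * u powr (q - 1) \<ge> t * b * r / 2"
  proof (cases star)
    case True
    then have e: "norm f * (\<gamma> * u powr q) = b / 2 * c * F \<phi>" using eq by (simp add: u_def)
    have "norm f' \<le> norm f - (1 - b) * c * F \<phi>" using sI e by (simp add: algebra_simps)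
    moreover have "(1 - b) * c * F \<phi> \<ge> (1 - b) * c * (t * r)"
      using tr b c by (intro mult_left_mono) (auto simp: r_def)
    moreover have "\<gamma> * u powr (q - 1) = b / 2 * F \<phi>"
    proof -
      have "norm f * u * (\<gamma> * u powr (q - 1)) = norm f * u * (b / 2 * F \<phi>)"
        using e unfolding uq cu by (simp add: algebra_simps)
      then show ?thesis using nf u0 by simp
    qed
    moreover have "b / 2 * F \<phi> \<ge> b / 2 * (t * r)" using tr b by (intro mult_left_mono) (auto simp: r_def)
    ultimately show ?thesis by (simp add: algebra_simps)
  next
    case False
    then have e: "norm f * (\<gamma> * u powr q) = t * b / 2 * c * r" using eq by (simp add: u_def r_def)
    have "norm f' \<le> norm f + t * b * c * r - c * F \<phi>" using sI e by (simp add: algebra_simps)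
    moreover have "c * F \<phi> \<ge> c * (t * r)" using tr c by (intro mult_left_mono) (auto simp: r_def)
    moreover have "\<gamma> * u powr (q - 1) = t * b / 2 * r"
    proof -
      have "norm f * u * (\<gamma> * u powr (q - 1)) = norm f * u * (t * b / 2 * r)"
        using e unfolding uq cu by (simp add: algebra_simps)
      then show ?thesis using nf u0 by simp
    qed
    ultimately show ?thesis by (simp add: algebra_simps)
  qed
  have "u powr (q - 1) \<ge> t * b * r / (2 * \<gamma>)" using main g by (simp add: field_simps)
  then have "(t * b * r / (2 * \<gamma>)) powr (1 / (q - 1)) \<le> (u powr (q - 1)) powr (1 / (q - 1))"
    using q t b r0 g by (intro powr_mono2) auto
  also have "\<dots> = u" using u0 q by (simp add: powr_powr)
  finally have "norm f * (t * b * r / (2 * \<gamma>)) powr (1 / (q - 1)) \<le> c"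
    using nf cu by (simp add: mult_left_mono)
  then show ?thesis using F \<phi> c f' main by (auto simp: r_def)
qed




lemma approx_bound:
  fixes f G :: "'a::banach"
  assumes sm: "\<forall>u\<ge>0. modulus_of_smoothness u TYPE('a) \<le> ereal (\<gamma> * u powr q)"
    and g: "\<gamma> > 0" and q: "q > 1" and t: "t > 0" "t \<le> 1" and b: "b > 0" "b < 1"
    and D: "dictionary D" and f: "f \<noteq> 0" and fin: "A1_finite D f"
    and ap: "dga_approx star t b (\<lambda>u. \<gamma> * u powr q) D f m G" and m: "1 \<le> m"
    and al: "0 < \<alpha>" "\<alpha> \<le> t * (1 - b) / (1 + t * (1 - b))"
  shows "norm f \<le> A1norm D f \<and> norm (f - G) \<le> norm f powr (1 - \<alpha>) * A1norm D f powr \<alpha> *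
     (1 + m * ((1 - b) * (b / (2 * \<gamma>)) powr (1 / (q - 1)) * t powr (q / (q - 1)))) powr (- \<alpha> / (q / (q - 1)))"
proof -
  define \<kappa> where "\<kappa> = t * (1 - b)"
  define e where "e = 1 / (q - 1)"
  define p where "p = q / (q - 1)"
  define C where "C = (1 - b) * (b / (2 * \<gamma>)) powr e * t powr p"
  define A where "A = A1norm D f"
  have k: "0 < \<kappa>" "\<kappa> \<le> 1" using t b by (auto simp: \<kappa>_def mult_le_one)
  have p1: "p \<ge> 1" "1 + e = p" using q by (auto simp: p_def e_def field_simps)
  have C0: "C > 0" using b g t by (simp add: C_def)
  obtain fs where fs0: "fs 0 = f" and steps: "\<forall>i<m. dga_step star t b (\<lambda>u. \<gamma> * u powr q) D (fs i) (fs (Suc i))"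
    and G: "G = f - fs m" using ap unfolding dga_approx_def by auto
  have Dne: "D \<noteq> {}"
  proof
    assume "D = {}"
    then have "closure (span D) = {0}" by simp
    then show False using D f by (auto simp: dictionary_def)
  qed
  then obtain d where d: "d \<in> D" by auto
  define P where "P = (\<lambda>n (x :: real \<times> 'a). snd x \<in> D \<and> fst x \<ge> 0 \<and> fs (Suc n) = fs n - fst x *\<^sub>R snd x \<and>
      (fs n \<noteq> 0 \<longrightarrow> (\<exists>F. norming_functional (fs n) F \<and> fst x > 0 \<and>
         norm (fs (Suc n)) \<le> norm (fs n) - \<kappa> * fst x * r_D D F \<and>
         fst x \<ge> norm (fs n) * (t * b * r_D D F / (2 * \<gamma>)) powr e)))"
  have "\<forall>n. \<exists>x. n < m \<longrightarrow> P n x"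
  proof
    fix n show "\<exists>x. n < m \<longrightarrow> P n x"
    proof (cases "n < m")
      case True
      note st = steps[rule_format, OF True]
      show ?thesis
      proof (cases "fs n = 0")
        case True
        then have "fs (Suc n) = 0" using st by (simp add: dga_step_def)
        then have "P n (0, d)" using True d by (simp add: P_def)
        then show ?thesis by blast
      next
        case False
        from step_props[OF sm g q t(1,2) b(1) _ D st False] b
        obtain F \<phi> c where "norming_functional (fs n) F" "\<phi> \<in> D" "c > 0" "fs (Suc n) = fs n - c *\<^sub>R \<phi>"
          "norm (fs (Suc n)) \<le> norm (fs n) - t * (1 - b) * c * r_D D F"
          "c \<ge> norm (fs n) * (t * b * r_D D F / (2 * \<gamma>)) powr (1 / (q - 1))" by auto
        then have "P n (c, \<phi>)" by (auto simp: P_def \<kappa>_def e_def)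
        then show ?thesis by blast
      qed
    qed simp
  qed
  then obtain sel where sel: "\<forall>n. n < m \<longrightarrow> P n (sel n)" by metis
  define c where "c = (\<lambda>n. fst (sel n))"
  define \<phi> where "\<phi> = (\<lambda>n. snd (sel n))"
  have c0: "\<forall>n<m. c n \<ge> 0" and \<phi>D: "\<forall>n<m. \<phi> n \<in> D"
    and rec: "\<forall>n<m. fs (Suc n) = fs n - c n *\<^sub>R \<phi> n"
    using sel by (auto simp: P_def c_def \<phi>_def)
  have rep: "n \<le> m \<Longrightarrow> fs n = f - (\<Sum>j<n. c j *\<^sub>R \<phi> j)" for n
    by (induction n) (use fs0 rec in auto)
  define a where "a = (\<lambda>n. norm (fs n))"
  define B where "B = (\<lambda>n. A + (\<Sum>j<n. c j))"
  have keyK: "a n \<le> r_D D F * B n" if nm: "n < m" and F: "norming_functional (fs n) F" for n F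
  proof -
    define r where "r = r_D D F"
    have up: "\<forall>g\<in>D. F g \<le> r" and r0: "r \<ge> 0" using rD_props[OF F D Dne] by (auto simp: r_def)
    have bl: "bounded_linear F" using nf_le(2)[OF F] .
    note lin = bounded_linear.linear[OF bl]
    have "a n = F (fs n)" using nf_le(3)[OF F] by (simp add: a_def)
    also have "\<dots> = F f - (\<Sum>j<n. c j * F (\<phi> j))"
      using rep[of n] nm by (simp add: linear_diff[OF lin] linear_sum[OF lin] linear_scale[OF lin])
    also have "\<dots> \<le> r * A + (\<Sum>j<n. c j * r)"
    proof -
      have "F f \<le> r * A" using A1_bound[OF bl up r0 fin] by (simp add: A_def)
      moreover have "- (\<Sum>j<n. c j * F (\<phi> j)) \<le> (\<Sum>j<n. c j * r)"
      proof -
        have "(\<Sum>j<n. c j * (- F (\<phi> j))) \<le> (\<Sum>j<n. c j * r)"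
        proof (rule sum_mono)
          fix j assume "j \<in> {..<n}"
          then have j: "j < m" using nm by simp
          have "F (- \<phi> j) \<le> r" using up \<phi>D j D by (auto simp: dictionary_def)
          then have "- F (\<phi> j) \<le> r" by (simp add: linear_neg[OF lin])
          moreover have "c j \<ge> 0" using c0 j by simp
          ultimately show "c j * (- F (\<phi> j)) \<le> c j * r" by (rule mult_left_mono)
        qed
        then show ?thesis by (simp add: sum_negf[symmetric])
      qed
      ultimately show ?thesis by linarith
    qed
    also have "\<dots> = r * B n" by (simp add: B_def sum_distrib_left algebra_simps)
    finally show ?thesis by (simp add: r_def)
  qed
  have A0: "A \<ge> 0" using A1norm_nonneg[OF fin] by (simp add: A_def)
  have a0A: "a 0 \<le> A"
  proof -
    obtain F where F: "norming_functional (fs 0) F" using sel m f fs0 by (force simp: P_def)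
    have "a 0 \<le> r_D D F * B 0" using keyK[OF _ F] m by simp
    also have "\<dots> \<le> 1 * A" using rD_props[OF F D Dne] A0 by (intro mult_mono) (auto simp: B_def)
    finally show ?thesis by simp
  qed
  have a0: "a 0 > 0" using f fs0 by (simp add: a_def)
  have Apos: "A > 0" using a0 a0A by simp
  have BA: "B n \<ge> A" if "n \<le> m" for n using c0 that by (auto simp: B_def intro!: sum_nonneg)
  have H: "a (Suc n) \<le> a n * (1 - \<kappa> * c n / B n) \<and> a (Suc n) \<le> a n * (1 - C * (a n / B n) powr p)"
    if nm: "n < m" for n
  proof (cases "fs n = 0")
    case True
    then have "fs (Suc n) = 0" using steps nm by (simp add: dga_step_def)
    then show ?thesis using True by (simp add: a_def)
  next
    case False
    obtain F where F: "norming_functional (fs n) F" and cp: "c n > 0"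
      and dec: "a (Suc n) \<le> a n - \<kappa> * c n * r_D D F"
      and cl: "c n \<ge> a n * (t * b * r_D D F / (2 * \<gamma>)) powr e"
      using sel nm False by (auto simp: P_def c_def a_def)
    define r where "r = r_D D F"
    have Bp: "B n > 0" using BA[of n] nm Apos by simp
    have an: "a n > 0" using False by (simp add: a_def)
    have K: "a n \<le> r * B n" using keyK[OF nm F] by (simp add: r_def)
    have rp: "r > 0"
    proof (rule ccontr)
      assume "\<not> r > 0"
      then have "r * B n \<le> 0" using Bp by (simp add: mult_nonpos_nonneg)
      then show False using K an by linarith
    qed
    have rB: "a n / B n \<le> r" using K Bp by (simp add: field_simps)
    have G1: "a (Suc n) \<le> a n * (1 - \<kappa> * c n / B n)"
    proof -
      have "\<kappa> * c n * (a n / B n) \<le> \<kappa> * c n * r" using rB k cp by (intro mult_left_mono) auto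
      then show ?thesis using dec Bp by (simp add: algebra_simps r_def)
    qed
    have ident: "\<kappa> * (t * b * r / (2 * \<gamma>)) powr e * r = C * r powr p"
    proof -
      have "(t * b * r / (2 * \<gamma>)) powr e = t powr e * (b / (2 * \<gamma>)) powr e * r powr e"
        using t b g rp by (simp add: powr_mult[symmetric] mult.assoc)
      then have "\<kappa> * (t * b * r / (2 * \<gamma>)) powr e * r = (1 - b) * (b / (2 * \<gamma>)) powr e * (t * t powr e) * (r powr e * r)"
        by (simp add: \<kappa>_def ac_simps)
      moreover have "t * t powr e = t powr p" using t p1 powr_add[of t 1 e] by simp
      moreover have "r powr e * r = r powr p" using rp p1 powr_add[of r e 1] by (simp add: add.commute)
      ultimately have "\<kappa> * (t * b * r / (2 * \<gamma>)) powr e * r = (1 - b) * (b / (2 * \<gamma>)) powr e * t powr p * r powr p"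
        by (simp only:)
      then show ?thesis unfolding C_def .
    qed
    have "\<kappa> * c n * r \<ge> \<kappa> * (a n * (t * b * r / (2 * \<gamma>)) powr e) * r"
      using cl k rp by (intro mult_right_mono mult_left_mono) (auto simp: r_def)
    also have "\<kappa> * (a n * (t * b * r / (2 * \<gamma>)) powr e) * r = a n * (C * r powr p)"
      using ident by (simp add: algebra_simps)
    also have "a n * (C * r powr p) \<ge> a n * (C * (a n / B n) powr p)"
      using rB an Bp C0 p1 by (intro mult_left_mono powr_mono2) auto
    finally have "\<kappa> * c n * r \<ge> a n * (C * (a n / B n) powr p)" .
    then have G2: "a (Suc n) \<le> a n * (1 - C * (a n / B n) powr p)"
      using dec by (simp add: algebra_simps r_def)
    show ?thesis using G1 G2 by blast
  qed
  have N: "a m * B m powr \<kappa> \<le> a 0 * A powr \<kappa>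
     \<and> (a m / B m) powr p * ((A / a 0) powr p + m * C) \<le> 1 \<and> B m \<ge> A"
  proof -
    have x1: "\<forall>n. a n \<ge> 0" by (simp add: a_def)
    have x2: "\<forall>n. B n = A + (\<Sum>j<n. c j)" by (simp add: B_def)
    have x3: "\<forall>n<m. a (Suc n) \<le> a n * (1 - \<kappa> * c n / B n)" using H by blast
    have x4: "\<forall>n<m. a (Suc n) \<le> a n * (1 - C * (a n / B n) powr p)" using H by blast
    show ?thesis by (rule numeric[OF Apos k C0 p1(1) a0 a0A x1 c0 x2 x3 x4 order_refl])
  qed
  have al': "\<alpha> \<le> \<kappa> / (1 + \<kappa>)" using al by (simp add: \<kappa>_def)
  have "a m \<le> a 0 powr (1 - \<alpha>) * A powr \<alpha> * (1 + m * C) powr (- \<alpha> / p)"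
    using final_numeric[of "a m" "a 0" A "B m" \<kappa> C p \<alpha> m] N a0 a0A k C0 p1 al(1) al'
    by (auto simp: a_def)
  then show ?thesis using G fs0 a0A by (simp add: a_def A_def C_def p_def e_def)
qed




lemma gamma_bound:
  fixes \<gamma> q t b \<alpha> :: real and m :: nat
  assumes sm: "\<forall>u\<ge>0. modulus_of_smoothness u TYPE('a::banach) \<le> ereal (\<gamma> * u powr q)"
    and g: "\<gamma> > 0" and q: "1 < q" and t: "0 < t" "t \<le> 1" and b: "0 < b" "b \<le> 1"
    and m: "1 \<le> m" and al: "0 < \<alpha>" "\<alpha> \<le> t * (1 - b) / (1 + t * (1 - b))"
  shows "dga_gamma star t b (\<lambda>u. \<gamma> * u powr q) \<alpha> m TYPE('a)
           \<le> ereal ((1 + real m * ((1 - b) * (b / (2 * \<gamma>)) powr (1 / (q - 1)))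
                       * t powr (q / (q - 1))) powr (- \<alpha> / (q / (q - 1))))"
proof -
  have b1: "b < 1"
  proof (rule ccontr)
    assume "\<not> b < 1" then have "b = 1" using b by simp
    then show False using al by simp
  qed
  define R where "R = (1 + real m * ((1 - b) * (b / (2 * \<gamma>)) powr (1 / (q - 1)))
                       * t powr (q / (q - 1))) powr (- \<alpha> / (q / (q - 1)))"
  show ?thesis
    unfolding dga_gamma_def R_def[symmetric]
  proof (rule SUP_least, clarify)
    fix D and f G :: 'a
    assume D: "dictionary D" and f: "f \<noteq> 0" and fin: "A1_finite D f"
      and ap: "dga_approx star t b (\<lambda>u. \<gamma> * u powr q) D f m G"
    have nb: "norm (f - G) \<le> norm f powr (1 - \<alpha>) * A1norm D f powr \<alpha> * R"
      using conjunct2[OF approx_bound[OF sm g q t b(1) b1 D f fin ap m al]] by (simp only: R_def mult.assoc)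
    have Apos: "A1norm D f > 0"
      using conjunct1[OF approx_bound[OF sm g q t b(1) b1 D f fin ap m al]] f
      by (meson less_le_trans zero_less_norm_iff)
    show "ereal (norm (f - G) / (norm f powr (1 - \<alpha>) * A1norm D f powr \<alpha>)) \<le> ereal R"
      using nb Apos f by (simp add: pos_divide_le_eq mult.commute mult.left_commute)
  qed
qed

theorem theorem3p2:
  fixes \<gamma> q t b \<alpha> :: real and m :: nat
  assumes "\<gamma> > 0" and "1 < q" and "q \<le> 2"
    and "\<forall>u\<ge>0. modulus_of_smoothness u TYPE('a::banach) \<le> ereal (\<gamma> * u powr q)"
    and "0 < t" and "t \<le> 1" and "0 < b" and "b \<le> 1"
    and "1 \<le> m" and "0 < \<alpha>" and "\<alpha> \<le> 1"
    and "\<alpha> \<le> t * (1 - b) / (1 + t * (1 - b))"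
  shows "dga_gamma False t b (\<lambda>u. \<gamma> * u powr q) \<alpha> m TYPE('a)
           \<le> ereal ((1 + real m * ((1 - b) * (b / (2 * \<gamma>)) powr (1 / (q - 1)))
                       * t powr (q / (q - 1))) powr (- \<alpha> / (q / (q - 1))))
       \<and> dga_gamma True t b (\<lambda>u. \<gamma> * u powr q) \<alpha> m TYPE('a)
           \<le> ereal ((1 + real m * ((1 - b) * (b / (2 * \<gamma>)) powr (1 / (q - 1)))
                       * t powr (q / (q - 1))) powr (- \<alpha> / (q / (q - 1))))"
  using gamma_bound[OF assms(4,1,2,5,6,7,8,9,10,12), of False]
        gamma_bound[OF assms(4,1,2,5,6,7,8,9,10,12), of True] by blast

end
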